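(* There is a neighborhood $U\subset\mathbb C_n$ of the image of $\gamma_0$ such that at every point of $U$ one has $\mathcal D_n+[\mathcal D_n,\mathcal D_n]=T\mathbb C_n$. That is, $\mathcal D_n$ is completely non-integrable on $U$ with growth vector $(n,2n-1)$; the vector fields $\xi_i$ together with their first commutators span the tangent spaces of $\mathbb C_n$.
   Context: Let $n\ge3$ and let $\mathcal P_n$ be the $2n$-dimensional manifold of convex $n$-gons in $\mathbb R^2$. A polygon is encoded by its side lines, cyclically ordered counterclockwise (indices mod $n$): $L_i=\{x\cos\alpha_i+y\sin\alpha_i=p_i\}$, with $(\cos\alpha_i,\sin\alpha_i)$ the outer unit normal. The coordinates are $(\alpha_i,p_i)$, with $0<\alpha_{i+1}-\alpha_i<\pi$ and total turning $2\pi$. Let $\mathcal D_n$ be the distribution spanned by the vector fields $\xi_i=\partial_{\alpha_i}+\Phi_i\,\partial_{p_i}$, $i=1,\dots,n$, where $$\Phi_i=\frac{\cos^2\!\big(\frac{\alpha_i-\alpha_{i-1}}2\big)(p_{i+1}+p_i)-\cos^2\!\big(\frac{\alpha_{i+1}-\alpha_i}2\big)(p_{i-1}+p_i)}{2\sin\!\big(\frac{\alpha_{i+1}-\alpha_{i-1}}2\big)\cos\!\big(\frac{\alpha_i-\alpha_{i-1}}2\big)\cos\!\big(\frac{\alpha_{i+1}-\alpha_i}2\big)}.$$ Geometrically, $\xi_i$ is the infinitesimal counterclockwise rotation of $L_i$ about the point $C_i$ where $L_i$ touches the circle tangent to $L_{i-1},L_i,L_{i+1}$. That circle lies on the polygon's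 side of $L_{i\pm1}$ and on the opposite side of $L_i$. $\mathcal D_n$ is tangent to the level sets of the perimeter $F$. Let $\mathbb C_n=\{F=2n\tan(\pi/n)\}$, a $(2n-1)$-dimensional submanifold of $\mathcal P_n$ carrying the $n$-dimensional distribution $\mathcal D_n$. Let $\gamma_0:[0,1]\to\mathbb C_n$ be the family of regular $n$-gons circumscribed about the unit circle centered at the origin: $\alpha_i(t)=\frac{2\pi}{n}(t+i-1)$, $p_i(t)=1$. *)

theory Defs
  imports "HOL-Analysis.Analysis"
begin

text \<open>A point of the coordinate space is a function x :: nat \<Rightarrow> real;
  for 0-based side index i < n, x i is the angle alpha_(i+1) and x (n+i) is p_(i+1).
  Values x k for k \<ge> 2n are ignored by every definition below.
  Side indices are cyclic mod n, and the angle lift satisfies alpha_(i+n) = alpha_i + 2 pi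
  (total turning 2 pi).\<close>

definition nxt :: "nat \<Rightarrow> nat \<Rightarrow> nat" where "nxt n i = (i + 1) mod n"
definition prv :: "nat \<Rightarrow> nat \<Rightarrow> nat" where "prv n i = (i + n - 1) mod n"

definition pc :: "nat \<Rightarrow> (nat \<Rightarrow> real) \<Rightarrow> nat \<Rightarrow> real" where
  "pc n x i = x (n + i)"

definition adiff :: "nat \<Rightarrow> (nat \<Rightarrow> real) \<Rightarrow> nat \<Rightarrow> real" where
  "adiff n x i = (if i + 1 < n then x (i + 1) - x i else x 0 + 2 * pi - x (n - 1))"

definition Phi :: "nat \<Rightarrow> (nat \<Rightarrow> real) \<Rightarrow> nat \<Rightarrow> real" where
  "Phi n x i =
    (let a = adiff n x (prv n i); b = adiff n x i in
      ((cos (a / 2))\<^sup>2 * (pc n x (nxt n i) + pc n x i)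
        - (cos (b / 2))\<^sup>2 * (pc n x (prv n i) + pc n x i))
      / (2 * sin ((a + b) / 2) * cos (a / 2) * cos (b / 2)))"

definition xi :: "nat \<Rightarrow> nat \<Rightarrow> (nat \<Rightarrow> real) \<Rightarrow> (nat \<Rightarrow> real)" where
  "xi n i x = (\<lambda>k. if k = i then 1 else if k = n + i then Phi n x i else 0)"

definition pd :: "((nat \<Rightarrow> real) \<Rightarrow> real) \<Rightarrow> (nat \<Rightarrow> real) \<Rightarrow> nat \<Rightarrow> real" where
  "pd f x j = deriv (\<lambda>t. f (x(j := x j + t))) 0"

definition lie :: "nat \<Rightarrow> ((nat \<Rightarrow> real) \<Rightarrow> (nat \<Rightarrow> real)) \<Rightarrow> ((nat \<Rightarrow> real) \<Rightarrow> (nat \<Rightarrow> real))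
    \<Rightarrow> (nat \<Rightarrow> real) \<Rightarrow> (nat \<Rightarrow> real)" where
  "lie n X Y x = (\<lambda>k. \<Sum>j<2 * n. X x j * pd (\<lambda>y. Y y k) x j - Y x j * pd (\<lambda>y. X y k) x j)"

text \<open>Vertex L_i \<inter> L_(i+1).\<close>
definition vertex :: "nat \<Rightarrow> (nat \<Rightarrow> real) \<Rightarrow> nat \<Rightarrow> real \<times> real" where
  "vertex n x i =
    (let a = x i; b = x (nxt n i); p = pc n x i; q = pc n x (nxt n i); s = sin (adiff n x i) in
      ((p * sin b - q * sin a) / s, (q * cos a - p * cos b) / s))"

text \<open>Signed length of side i (from vertex i-1 to vertex i along L_i, counterclockwise).\<close>
definition side_len :: "nat \<Rightarrow> (nat \<Rightarrow> real) \<Rightarrow> nat \<Rightarrow> real" where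
  "side_len n x i =
    (let u = vertex n x i; w = vertex n x (prv n i) in
      (fst u - fst w) * (- sin (x i)) + (snd u - snd w) * cos (x i))"

definition Pn :: "nat \<Rightarrow> (nat \<Rightarrow> real) set" where
  "Pn n = {x. (\<forall>i<n. 0 < adiff n x i \<and> adiff n x i < pi) \<and> (\<forall>i<n. 0 < side_len n x i)}"

definition perimeter :: "nat \<Rightarrow> (nat \<Rightarrow> real) \<Rightarrow> real" where
  "perimeter n x = (\<Sum>i<n. dist (vertex n x (prv n i)) (vertex n x i))"

definition Cn :: "nat \<Rightarrow> (nat \<Rightarrow> real) set" where
  "Cn n = {x \<in> Pn n. perimeter n x = 2 * real n * tan (pi / real n)}"

definition D_plus_bracket :: "nat \<Rightarrow> (nat \<Rightarrow> real) \<Rightarrow> (nat \<Rightarrow> real) set" where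
  "D_plus_bracket n x = {v. \<exists>c d. \<forall>k<2 * n.
      v k = (\<Sum>i<n. c i * xi n i x k) + (\<Sum>i<n. \<Sum>j<n. d i j * lie n (xi n i) (xi n j) x k)}"

definition tangent_Cn :: "nat \<Rightarrow> (nat \<Rightarrow> real) \<Rightarrow> (nat \<Rightarrow> real) set" where
  "tangent_Cn n x = {v. (\<Sum>j<2 * n. pd (perimeter n) x j * v j) = 0}"

text \<open>gamma_0(t): regular n-gons circumscribed about the unit circle.\<close>
definition gamma0 :: "nat \<Rightarrow> real \<Rightarrow> (nat \<Rightarrow> real)" where
  "gamma0 n t = (\<lambda>k. if k < n then 2 * pi / real n * (t + real k) else 1)"

end

theory Submission
  imports Defs
begin

lemma nxt_eq: "i < n \<Longrightarrow> nxt n i = (if i + 1 < n then i + 1 else 0)"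
proof -
  assume "i < n"
  then have "i + 1 < n \<or> i + 1 = n" by linarith
  then show ?thesis by (auto simp: nxt_def)
qed
lemma prv_eq: "i < n \<Longrightarrow> prv n i = (if i = 0 then n - 1 else i - 1)"
proof -
  assume a: "i < n"
  show ?thesis
  proof (cases "i = 0")
    case True then show ?thesis using a by (simp add: prv_def)
  next
    case False
    then have "i + n - 1 = (i - 1) + n" by simp
    then have "prv n i = ((i - 1) + n) mod n" by (simp add: prv_def)
    also have "\<dots> = i - 1" using a by simp
    finally show ?thesis using False by simp
  qed
qed

lemma nxt_lt: "0 < n \<Longrightarrow> nxt n i < n" by (simp add: nxt_def)
lemma prv_lt: "0 < n \<Longrightarrow> prv n i < n" by (simp add: prv_def)

lemma nxt_prv: "i < n \<Longrightarrow> nxt n (prv n i) = i"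
  by (auto simp: nxt_eq prv_eq prv_lt)
lemma prv_nxt: "i < n \<Longrightarrow> prv n (nxt n i) = i"
  by (auto simp: nxt_eq prv_eq nxt_lt)
lemma nxt_neq: "3 \<le> n \<Longrightarrow> i < n \<Longrightarrow> nxt n i \<noteq> i"
  by (auto simp: nxt_eq)
lemma prv_neq: "3 \<le> n \<Longrightarrow> i < n \<Longrightarrow> prv n i \<noteq> i"
  by (auto simp: prv_eq)
lemma nxt_neq_prv: "3 \<le> n \<Longrightarrow> i < n \<Longrightarrow> nxt n i \<noteq> prv n i"
  by (auto simp: prv_eq nxt_eq)
lemma nxt_iff: "i < n \<Longrightarrow> j < n \<Longrightarrow> (j = nxt n i) = (i = prv n j)"
  by (auto simp: prv_eq nxt_eq)

lemma adiff_upd: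
  assumes "i < n" "2 \<le> n"
  shows "adiff n (x(m := x m + t)) i = adiff n x i + t * (of_bool (m = nxt n i) - of_bool (m = i))"
  using assms by (auto simp: adiff_def nxt_eq algebra_simps)

lemma pc_upd: "pc n (x(m := x m + t)) i = pc n x i + t * of_bool (m = n + i)"
  by (auto simp: pc_def)

lemma sum_delta_nxt:
  assumes "m < n"
  shows "(\<Sum>i<n. of_bool (m = nxt n i) * (f i :: real)) = f (prv n m)"
proof -
  have "(\<Sum>i<n. of_bool (m = nxt n i) * f i) = (\<Sum>i<n. if i = prv n m then f i else 0)"
    by (rule sum.cong) (auto simp: nxt_iff assms)
  also have "\<dots> = f (prv n m)" using assms by (simp add: prv_lt)
  finally show ?thesis .
qed

lemma sum_nxt_reindex:
  assumes "0 < n"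
  shows "(\<Sum>i<n. f (nxt n i)) = (\<Sum>i<n. (f i :: real))"
proof -
  have "bij_betw (nxt n) {..<n} {..<n}"
    unfolding bij_betw_def
  proof
    show "inj_on (nxt n) {..<n}"
      by (metis inj_onI lessThan_iff prv_nxt)
    show "nxt n ` {..<n} = {..<n}"
      using assms by (auto simp: nxt_lt image_iff intro!: bexI[of _ "prv n _"] nxt_prv[symmetric] prv_lt)
  qed
  then show ?thesis by (rule sum.reindex_bij_betw)
qed


lemma adiff_per: "i < n \<Longrightarrow> 2 \<le> n \<Longrightarrow>
   adiff n x i = x (nxt n i) - x i \<or> adiff n x i = (x (nxt n i) - x i) + 2 * pi"
proof -
  assume a: "i < n" "2 \<le> n"
  show ?thesis
  proof (cases "i + 1 < n")
    case True then show ?thesis using a by (simp add: adiff_def nxt_eq)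
  next
    case False then have "i = n - 1" using a by simp
    then show ?thesis using a False by (simp add: adiff_def nxt_eq)
  qed
qed
lemma cos_adiff: "i < n \<Longrightarrow> 2 \<le> n \<Longrightarrow> cos (adiff n x i) = cos (x (nxt n i) - x i)"
  using adiff_per[of i n x] by (auto simp del: cos_periodic simp: cos_periodic)
lemma sin_adiff: "i < n \<Longrightarrow> 2 \<le> n \<Longrightarrow> sin (adiff n x i) = sin (x (nxt n i) - x i)"
  using adiff_per[of i n x] by auto

lemma div_comb: "(X::real) / s * c + Y / s * d = (X * c + Y * d) / s"
  by (simp add: add_divide_distrib)

lemma vdot1: "(((p::real) * sin b - q * sin a)/s) * (- sin a) + ((q * cos a - p * cos b)/s) * cos a
   = (q - p * cos(b-a))/s"
proof -
  have "((p * sin b - q * sin a)/s) * (- sin a) + ((q * cos a - p * cos b)/s) * cos a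
     = ((p * sin b - q * sin a) * (- sin a) + (q * cos a - p * cos b) * cos a)/s"
    by (rule div_comb)
  also have "(p * sin b - q * sin a) * (- sin a) + (q * cos a - p * cos b) * cos a
      = q - p * cos(b-a)"
    using sin_cos_squared_add[of a] unfolding cos_diff by algebra
  finally show ?thesis by simp
qed

lemma vdot2: "(((p::real) * sin b - q * sin a)/s) * (- sin b) + ((q * cos a - p * cos b)/s) * cos b
   = (- p + q * cos(b-a))/s"
proof -
  have "((p * sin b - q * sin a)/s) * (- sin b) + ((q * cos a - p * cos b)/s) * cos b
     = ((p * sin b - q * sin a) * (- sin b) + (q * cos a - p * cos b) * cos b)/s"
    by (rule div_comb)
  also have "(p * sin b - q * sin a) * (- sin b) + (q * cos a - p * cos b) * cos b
      = - p + q * cos(b-a)"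
    using sin_cos_squared_add[of b] unfolding cos_diff by algebra
  finally show ?thesis by simp
qed

lemma vn1: "sin (b - a) \<noteq> 0 \<Longrightarrow>
  (((p::real) * sin b - q * sin a)/sin (b-a)) * cos a + ((q * cos a - p * cos b)/sin (b-a)) * sin a = p"
proof -
  assume h: "sin (b - a) \<noteq> 0"
  have "((p * sin b - q * sin a)/sin (b-a)) * cos a + ((q * cos a - p * cos b)/sin (b-a)) * sin a
     = ((p * sin b - q * sin a) * cos a + (q * cos a - p * cos b) * sin a)/sin (b-a)"
    by (rule div_comb)
  also have "(p * sin b - q * sin a) * cos a + (q * cos a - p * cos b) * sin a = p * sin (b - a)"
    by (simp add: sin_diff algebra_simps)
  finally show ?thesis using h by simp
qed

lemma vn2: "sin (b - a) \<noteq> 0 \<Longrightarrow>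
  (((p::real) * sin b - q * sin a)/sin (b-a)) * cos b + ((q * cos a - p * cos b)/sin (b-a)) * sin b = q"
proof -
  assume h: "sin (b - a) \<noteq> 0"
  have "((p * sin b - q * sin a)/sin (b-a)) * cos b + ((q * cos a - p * cos b)/sin (b-a)) * sin b
     = ((p * sin b - q * sin a) * cos b + (q * cos a - p * cos b) * sin b)/sin (b-a)"
    by (rule div_comb)
  also have "(p * sin b - q * sin a) * cos b + (q * cos a - p * cos b) * sin b = q * sin (b - a)"
    by (simp add: sin_diff algebra_simps)
  finally show ?thesis using h by simp
qed

lemma side_len_formula:
  assumes "i < n" "3 \<le> n"
  shows "side_len n x i = (pc n x (nxt n i) - pc n x i * cos (adiff n x i)) / sin (adiff n x i)
     + (pc n x (prv n i) - pc n x i * cos (adiff n x (prv n i))) / sin (adiff n x (prv n i))"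
proof -
  have pl: "prv n i < n" using assms by (simp add: prv_lt)
  have np: "nxt n (prv n i) = i" using assms by (simp add: nxt_prv)
  define a b c where "a = x (prv n i)" and "b = x i" and "c = x (nxt n i)"
  define s1 s2 where "s1 = sin (adiff n x i)" and "s2 = sin (adiff n x (prv n i))"
  have e1: "cos (adiff n x i) = cos (c - b)" using assms by (simp add: cos_adiff a_def b_def c_def)
  have e2: "cos (adiff n x (prv n i)) = cos (b - a)" using assms pl
    by (simp add: cos_adiff a_def b_def c_def np)
  have "side_len n x i =
     (((pc n x i * sin c - pc n x (nxt n i) * sin b)/s1) * (- sin b) + ((pc n x (nxt n i) * cos b - pc n x i * cos c)/s1) * cos b)
   - (((pc n x (prv n i) * sin b - pc n x i * sin a)/s2) * (- sin b) + ((pc n x i * cos a - pc n x (prv n i) * cos b)/s2) * cos b)"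
    unfolding side_len_def vertex_def Let_def np a_def b_def c_def s1_def s2_def
    by (simp add: algebra_simps)
  also have "\<dots> = (pc n x (nxt n i) - pc n x i * cos (c - b))/s1 - (- pc n x (prv n i) + pc n x i * cos (b - a))/s2"
    by (simp only: vdot1 vdot2)
  finally show ?thesis unfolding e1 e2 s1_def s2_def by (simp add: diff_divide_distrib add_divide_distrib)
qed

lemma dist_perp:
  assumes "(u1 - v1) * cos a + (u2 - v2) * sin a = 0"
  shows "dist (v1, v2) (u1, (u2::real)) = \<bar>(u1 - v1) * (- sin a) + (u2 - v2) * cos a\<bar>"
proof -
  have "(u1 - v1)\<^sup>2 + (u2 - v2)\<^sup>2 = ((u1 - v1) * cos a + (u2 - v2) * sin a)\<^sup>2 + ((u1 - v1) * (- sin a) + (u2 - v2) * cos a)\<^sup>2"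
  proof -
    have "((u1 - v1) * cos a + (u2 - v2) * sin a)\<^sup>2 + ((u1 - v1) * (- sin a) + (u2 - v2) * cos a)\<^sup>2
       = ((u1 - v1)\<^sup>2 + (u2 - v2)\<^sup>2) * ((sin a)\<^sup>2 + (cos a)\<^sup>2)"
      by algebra
    then show ?thesis by simp
  qed
  then have "(u1 - v1)\<^sup>2 + (u2 - v2)\<^sup>2 = ((u1 - v1) * (- sin a) + (u2 - v2) * cos a)\<^sup>2" using assms by simp
  then show ?thesis by (simp add: dist_Pair_Pair dist_real_def power2_commute)
qed

lemma dist_side:
  assumes "i < n" "3 \<le> n" "sin (adiff n x i) \<noteq> 0" "sin (adiff n x (prv n i)) \<noteq> 0"
  shows "dist (vertex n x (prv n i)) (vertex n x i) = \<bar>side_len n x i\<bar>"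
proof -
  have pl: "prv n i < n" using assms by (simp add: prv_lt)
  have np: "nxt n (prv n i) = i" using assms by (simp add: nxt_prv)
  have s1: "sin (adiff n x i) = sin (x (nxt n i) - x i)" using assms by (simp add: sin_adiff)
  have s2: "sin (adiff n x (prv n i)) = sin (x i - x (prv n i))" using assms pl by (simp add: sin_adiff np)
  have h1: "fst (vertex n x i) * cos (x i) + snd (vertex n x i) * sin (x i) = pc n x i"
    unfolding vertex_def Let_def s1 using vn1[of "x (nxt n i)" "x i"] assms(3) s1 by simp
  have h2: "fst (vertex n x (prv n i)) * cos (x i) + snd (vertex n x (prv n i)) * sin (x i) = pc n x i"
    unfolding vertex_def Let_def s2 np using vn2[of "x i" "x (prv n i)"] assms(4) s2 by simp
  have "(fst (vertex n x i) - fst (vertex n x (prv n i))) * cos (x i) + (snd (vertex n x i) - snd (vertex n x (prv n i))) * sin (x i) = 0"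
    using h1 h2 by (simp add: algebra_simps)
  from dist_perp[OF this] show ?thesis
    by (simp add: side_len_def Let_def)
qed

definition Floc :: "nat \<Rightarrow> (nat \<Rightarrow> real) \<Rightarrow> real" where
  "Floc n y = (\<Sum>i<n. (pc n y i + pc n y (nxt n i)) * tan (adiff n y i / 2))"

lemma half_tan: "(1 - cos b) / sin b = tan (b / 2)"
proof -
  have b: "b = 2 * (b/2)" by simp
  define h where "h = b / 2"
  have "sin b = 2 * sin h * cos h" unfolding h_def by (subst b) (simp only: sin_double)
  moreover have "cos b = 1 - 2 * (sin h)\<^sup>2" unfolding h_def by (subst b) (simp only: cos_double_sin)
  ultimately have "(1 - cos b) / sin b = (2 * (sin h)\<^sup>2) / (2 * sin h * cos h)" by simp
  also have "\<dots> = tan h" by (cases "sin h = 0"; simp add: tan_def power2_eq_square field_simps)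
  finally show ?thesis by (simp add: h_def)
qed

lemma sum_side_len:
  assumes "3 \<le> n"
  shows "(\<Sum>i<n. side_len n x i) = Floc n x"
proof -
  have n0: "0 < n" using assms by simp
  let ?A = "\<lambda>i. (pc n x (nxt n i) - pc n x i * cos (adiff n x i)) / sin (adiff n x i)"
  let ?B = "\<lambda>i. (pc n x i - pc n x (nxt n i) * cos (adiff n x i)) / sin (adiff n x i)"
  have "(\<Sum>i<n. side_len n x i) = (\<Sum>i<n. ?A i) + (\<Sum>i<n. ?B (prv n i))"
    using assms by (simp add: side_len_formula sum.distrib nxt_prv)
  also have "(\<Sum>i<n. ?B (prv n i)) = (\<Sum>i<n. ?B (prv n (nxt n i)))"
    using sum_nxt_reindex[OF n0, of "\<lambda>i. ?B (prv n i)"] by simp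
  also have "\<dots> = (\<Sum>i<n. ?B i)" by (simp add: prv_nxt)
  also have "(\<Sum>i<n. ?A i) + (\<Sum>i<n. ?B i) = Floc n x"
    unfolding Floc_def sum.distrib[symmetric]
  proof (rule sum.cong)
    fix i
    have "?A i + ?B i = (pc n x i + pc n x (nxt n i)) * ((1 - cos (adiff n x i)) / sin (adiff n x i))"
      by (simp add: field_split_simps algebra_simps) 
    then show "?A i + ?B i = (pc n x i + pc n x (nxt n i)) * tan (adiff n x i / 2)"
      by (simp add: half_tan)
  qed simp
  finally show ?thesis .
qed

lemma perimeter_Floc:
  assumes "3 \<le> n" "\<forall>i<n. sin (adiff n x i) \<noteq> 0 \<and> 0 \<le> side_len n x i"
  shows "perimeter n x = Floc n x"
proof -
  have "perimeter n x = (\<Sum>i<n. side_len n x i)"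
    unfolding perimeter_def
  proof (rule sum.cong)
    fix i assume "i \<in> {..<n}"
    then have i: "i < n" by simp
    then have "prv n i < n" using assms by (simp add: prv_lt)
    then show "dist (vertex n x (prv n i)) (vertex n x i) = side_len n x i"
      using dist_side[OF i assms(1)] assms(2) i by simp
  qed simp
  then show ?thesis using sum_side_len[OF assms(1)] by simp
qed


definition Nf :: "real \<Rightarrow> real \<Rightarrow> real \<Rightarrow> real \<Rightarrow> real \<Rightarrow> real" where
  "Nf a b pn pm pp = (cos (a / 2))\<^sup>2 * (pn + pm) - (cos (b / 2))\<^sup>2 * (pp + pm)"
definition Df :: "real \<Rightarrow> real \<Rightarrow> real" where
  "Df a b = 2 * sin ((a + b) / 2) * cos (a / 2) * cos (b / 2)"
definition PhiF :: "real \<Rightarrow> real \<Rightarrow> real \<Rightarrow> real \<Rightarrow> real \<Rightarrow> real" where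
  "PhiF a b pn pm pp = Nf a b pn pm pp / Df a b"

lemma Phi_PhiF: "Phi n x i = PhiF (adiff n x (prv n i)) (adiff n x i) (pc n x (nxt n i)) (pc n x i) (pc n x (prv n i))"
  by (simp add: Phi_def PhiF_def Nf_def Df_def Let_def)

definition Gf :: "real \<Rightarrow> real \<Rightarrow> real \<Rightarrow> real \<Rightarrow> real \<Rightarrow> real" where
  "Gf u v pn pm pp = ((pn + pm) * (1 + v\<^sup>2) - (pp + pm) * (1 + u\<^sup>2)) / (2 * (u + v))"
definition GU where "GU u v pn pm pp =
  ((- (pp + pm) * (2 * u)) * (2 * (u + v)) - ((pn + pm) * (1 + v\<^sup>2) - (pp + pm) * (1 + u\<^sup>2)) * 2) / (2 * (u + v))\<^sup>2"
definition GV where "GV u v pn pm pp =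
  (((pn + pm) * (2 * v)) * (2 * (u + v)) - ((pn + pm) * (1 + v\<^sup>2) - (pp + pm) * (1 + u\<^sup>2)) * 2) / (2 * (u + v))\<^sup>2"
definition GN where "GN u v = (1 + v\<^sup>2) / (2 * (u + v))"
definition GM where "GM u v = ((1 + v\<^sup>2) - (1 + u\<^sup>2)) / (2 * (u + v))"
definition GP where "GP u v = - (1 + u\<^sup>2) / (2 * (u + v))"

lemma sec_sq: "cos x \<noteq> 0 \<Longrightarrow> inverse ((cos x)\<^sup>2) = 1 + (tan x)\<^sup>2"
proof -
  assume c: "cos x \<noteq> 0"
  have "1 + (tan x)\<^sup>2 = ((sin x)\<^sup>2 + (cos x)\<^sup>2) / (cos x)\<^sup>2" using c
    by (simp add: tan_def field_simps power2_eq_square)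
  then show ?thesis by (simp add: divide_inverse)
qed

lemma PhiF_G:
  assumes "cos (a / 2) \<noteq> 0" "cos (b / 2) \<noteq> 0"
  shows "PhiF a b pn pm pp = Gf (tan (a / 2)) (tan (b / 2)) pn pm pp"
proof -
  define sa ca sb cb where "sa = sin (a/2)" and "ca = cos (a/2)" and "sb = sin (b/2)" and "cb = cos (b/2)"
  have S: "sin ((a + b) / 2) = sa * cb + ca * sb"
    using sin_add[of "a/2" "b/2"] by (simp add: sa_def ca_def sb_def cb_def add_divide_distrib)
  have ca: "ca \<noteq> 0" and cb: "cb \<noteq> 0" using assms by (simp_all add: ca_def cb_def)
  have pa: "1 + (sa / ca)\<^sup>2 = 1 / ca\<^sup>2"
    using ca sin_cos_squared_add[of "a/2"] by (simp add: sa_def ca_def field_simps)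
  have pb: "1 + (sb / cb)\<^sup>2 = 1 / cb\<^sup>2"
    using cb sin_cos_squared_add[of "b/2"] by (simp add: sb_def cb_def field_simps)
  define SS where "SS = sa * cb + ca * sb"
  have t: "sa / ca + sb / cb = SS / (ca * cb)" using ca cb by (simp add: field_simps SS_def)
  have "Gf (sa / ca) (sb / cb) pn pm pp = ((pn + pm) * (1 / cb\<^sup>2) - (pp + pm) * (1 / ca\<^sup>2)) / (2 * (SS / (ca * cb)))"
    unfolding Gf_def pa pb t ..
  also have "\<dots> = (ca\<^sup>2 * (pn + pm) - cb\<^sup>2 * (pp + pm)) / (2 * SS * ca * cb)"
  proof (cases "SS = 0")
    case True then show ?thesis by simp
  next
    case False
    have "(pn + pm) * (1 / cb\<^sup>2) - (pp + pm) * (1 / ca\<^sup>2) = (ca\<^sup>2 * (pn + pm) - cb\<^sup>2 * (pp + pm)) / (ca\<^sup>2 * cb\<^sup>2)"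
      using ca cb by (simp add: field_simps)
    then show ?thesis using ca cb False by (simp add: field_simps power2_eq_square)
  qed
  finally show ?thesis
    unfolding PhiF_def Nf_def Df_def S SS_def by (simp add: tan_def sa_def ca_def sb_def cb_def)
qed

lemma G_chain_eq:
  fixes u v :: real
  assumes "u + v \<noteq> 0"
  shows "(((0 + (0 * 0 + 1 * kn) + (0 + (0 * 0 + 1 * km))) * (1 + (v)\<^sup>2) +
       (0 + real 2 * (db * v ^ (2 - Suc 0))) *
       (pn + kn * 0 + (pm + km * 0)) -
       ((0 + (0 * 0 + 1 * kp) + (0 + (0 * 0 + 1 * km))) * (1 + (u)\<^sup>2) +
        (0 + real 2 * (da * u ^ (2 - Suc 0))) *
        (pp + kp * 0 + (pm + km * 0)))) *
      (2 * (u + v)) -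
      ((pn + kn * 0 + (pm + km * 0)) * (1 + (v)\<^sup>2) -
       (pp + kp * 0 + (pm + km * 0)) * (1 + (u)\<^sup>2)) *
      (0 * (u + v) + (da + db) * 2)) /
     (2 * (u + v) * (2 * (u + v))) =
     da * GU (u) (v) pn pm pp + db * GV (u) (v) pn pm pp +
     kn * GN (u) (v) +
     km * GM (u) (v) +
     kp * GP (u) (v)"
proof -
  have d: "2 * (u + v) \<noteq> 0" using assms by simp
  have D: "2 * u + 2 * v \<noteq> 0" using assms by simp
  show ?thesis
  unfolding GU_def GV_def GN_def GM_def GP_def
  apply simp
  using D apply (simp add: divide_simps)
  apply algebra
  done
qed

lemma G_chain:
  assumes "(fa has_real_derivative da) (at 0)" "(fb has_real_derivative db) (at 0)" "fa 0 + fb 0 \<noteq> 0"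
  shows "((\<lambda>t. Gf (fa t) (fb t) (pn + kn * t) (pm + km * t) (pp + kp * t)) has_real_derivative
     da * GU (fa 0) (fb 0) pn pm pp + db * GV (fa 0) (fb 0) pn pm pp + kn * GN (fa 0) (fb 0)
     + km * GM (fa 0) (fb 0) + kp * GP (fa 0) (fb 0)) (at 0)"
  unfolding Gf_def
  apply (rule DERIV_divide[THEN DERIV_cong])
    apply (rule derivative_eq_intros assms refl)+
  using assms(3) apply simp
  apply (rule G_chain_eq[OF assms(3)])
  done

lemma tan_half_deriv:
  assumes "cos (a / 2) \<noteq> 0"
  shows "((\<lambda>t. tan ((a + k * t) / 2)) has_real_derivative (1 + (tan (a / 2))\<^sup>2) * (k / 2)) (at 0)"
proof (rule DERIV_chain2[where f = tan])
  show "DERIV tan ((a + k * 0) / 2) :> 1 + (tan (a / 2))\<^sup>2"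
    using assms DERIV_tan[of "a/2"] by (simp add: sec_sq)
  show "((\<lambda>t. (a + k * t) / 2) has_real_derivative k / 2) (at 0)"
    by (auto intro!: derivative_eq_intros)
qed

lemma eventually_cos_ne:
  fixes a k :: real
  assumes "cos (a / 2) \<noteq> 0"
  shows "eventually (\<lambda>t. cos ((a + k * t) / 2) \<noteq> 0) (nhds 0)"
proof -
  have "isCont (\<lambda>t. cos ((a + k * t) / 2)) 0"
    by (auto intro!: continuous_intros)
  then have "((\<lambda>t. cos ((a + k * t) / 2)) \<longlongrightarrow> cos ((a + k * 0) / 2)) (at 0)"
    by (simp add: isCont_def)
  moreover have "cos ((a + k * 0) / 2) \<noteq> 0" using assms by simp
  ultimately have "eventually (\<lambda>t. cos ((a + k * t) / 2) \<noteq> 0) (at 0)"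
    by (rule tendsto_imp_eventually_ne)
  moreover have "cos ((a + k * 0) / 2) \<noteq> 0" using assms by simp
  ultimately show ?thesis by (intro iffD2[OF eventually_nhds_conv_at] conjI)
qed

definition tq :: "real \<Rightarrow> real" where "tq a = tan (a / 2)"

lemma PhiF_line_deriv:
  assumes "cos (a / 2) \<noteq> 0" "cos (b / 2) \<noteq> 0" "tq a + tq b \<noteq> 0"
  shows "((\<lambda>t. PhiF (a + ka * t) (b + kb * t) (pn + kn * t) (pm + km * t) (pp + kp * t)) has_real_derivative
     (1 + (tq a)\<^sup>2) * (ka / 2) * GU (tq a) (tq b) pn pm pp + (1 + (tq b)\<^sup>2) * (kb / 2) * GV (tq a) (tq b) pn pm pp
     + kn * GN (tq a) (tq b) + km * GM (tq a) (tq b) + kp * GP (tq a) (tq b)) (at 0)"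
proof -
  have ev: "eventually (\<lambda>t. PhiF (a + ka * t) (b + kb * t) (pn + kn * t) (pm + km * t) (pp + kp * t)
     = Gf (tan ((a + ka * t) / 2)) (tan ((b + kb * t) / 2)) (pn + kn * t) (pm + km * t) (pp + kp * t)) (nhds 0)"
    using eventually_cos_ne[OF assms(1), of ka] eventually_cos_ne[OF assms(2), of kb]
    by eventually_elim (rule PhiF_G)
  have "((\<lambda>t. Gf (tan ((a + ka * t) / 2)) (tan ((b + kb * t) / 2)) (pn + kn * t) (pm + km * t) (pp + kp * t)) has_real_derivative
     (1 + (tq a)\<^sup>2) * (ka / 2) * GU (tq a) (tq b) pn pm pp + (1 + (tq b)\<^sup>2) * (kb / 2) * GV (tq a) (tq b) pn pm pp
     + kn * GN (tq a) (tq b) + km * GM (tq a) (tq b) + kp * GP (tq a) (tq b)) (at 0)"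
    using G_chain[OF tan_half_deriv[OF assms(1), of ka] tan_half_deriv[OF assms(2), of kb], of pn kn pm km pp kp] assms(3)
    by (simp add: tq_def)
  then show ?thesis
    by (subst DERIV_cong_ev[OF refl ev refl])
qed

lemma pd_Phi:
  assumes "j < n" "3 \<le> n" "cos (adiff n x (prv n j) / 2) \<noteq> 0" "cos (adiff n x j / 2) \<noteq> 0"
    "tq (adiff n x (prv n j)) + tq (adiff n x j) \<noteq> 0"
  shows "pd (\<lambda>y. Phi n y j) x m =
    (1 + (tq (adiff n x (prv n j)))\<^sup>2) * ((of_bool (m = j) - of_bool (m = prv n j)) / 2) * GU (tq (adiff n x (prv n j))) (tq (adiff n x j)) (pc n x (nxt n j)) (pc n x j) (pc n x (prv n j))
  + (1 + (tq (adiff n x j))\<^sup>2) * ((of_bool (m = nxt n j) - of_bool (m = j)) / 2) * GV (tq (adiff n x (prv n j))) (tq (adiff n x j)) (pc n x (nxt n j)) (pc n x j) (pc n x (prv n j))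
  + of_bool (m = n + nxt n j) * GN (tq (adiff n x (prv n j))) (tq (adiff n x j))
  + of_bool (m = n + j) * GM (tq (adiff n x (prv n j))) (tq (adiff n x j))
  + of_bool (m = n + prv n j) * GP (tq (adiff n x (prv n j))) (tq (adiff n x j))"
proof -
  have pl: "prv n j < n" using assms by (simp add: prv_lt)
  have np: "nxt n (prv n j) = j" using assms by (simp add: nxt_prv)
  have n2: "2 \<le> n" using assms by simp
  have e: "(\<lambda>t. Phi n (x(m := x m + t)) j) = (\<lambda>t. PhiF
     (adiff n x (prv n j) + (of_bool (m = j) - of_bool (m = prv n j)) * t)
     (adiff n x j + (of_bool (m = nxt n j) - of_bool (m = j)) * t)
     (pc n x (nxt n j) + of_bool (m = n + nxt n j) * t)
     (pc n x j + of_bool (m = n + j) * t)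
     (pc n x (prv n j) + of_bool (m = n + prv n j) * t))"
    unfolding Phi_PhiF adiff_upd[OF pl n2] adiff_upd[OF assms(1) n2] pc_upd np
    by (simp add: algebra_simps)
  show ?thesis
    unfolding pd_def e by (rule DERIV_imp_deriv, rule PhiF_line_deriv[OF assms(3,4,5)])
qed


lemma sum_delta_eq:
  assumes "m < (n::nat)"
  shows "(\<Sum>i<n. of_bool (m = i) * (f i :: real)) = f m"
proof -
  have "(\<Sum>i<n. of_bool (m = i) * f i) = (\<Sum>i<n. if i = m then f i else 0)"
    by (rule sum.cong) auto
  also have "\<dots> = f m" using assms by simp
  finally show ?thesis .
qed

lemma nxt_not_big: "0 < n \<Longrightarrow> n + k \<noteq> nxt n i" "0 < n \<Longrightarrow> k + n \<noteq> nxt n i"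
  using nxt_lt[of n i] by auto

lemma neg_div_aux: "(- a - b) / (D::real) = - ((a + b) / D)"
  by (simp add: diff_divide_distrib add_divide_distrib)
lemma inv_aux: "inverse ((c::real)\<^sup>2) * (e / 2) = e / (2 * c\<^sup>2)"
  by (simp add: field_split_simps)
lemma distr_e: "P * (((a::real) - b) / D) = a * (P / D) - b * (P / D)"
  by (simp add: field_split_simps)

definition FD :: "nat \<Rightarrow> (nat \<Rightarrow> real) \<Rightarrow> nat \<Rightarrow> real" where
  "FD n x m = (\<Sum>i<n. (of_bool (m = n + i) + of_bool (m = n + nxt n i)) * tan (adiff n x i / 2)
      + (pc n x i + pc n x (nxt n i)) * ((of_bool (m = nxt n i) - of_bool (m = i)) / (2 * (cos (adiff n x i / 2))\<^sup>2)))"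

lemma term_deriv:
  assumes "cos (B / 2) \<noteq> 0"
  shows "((\<lambda>t. ((P + k1 * t) + (Q + k2 * t)) * tan ((B + e * t) / 2)) has_real_derivative
     (k1 + k2) * tan (B / 2) + (P + Q) * (e / (2 * (cos (B / 2))\<^sup>2))) (at 0)"
proof -
  have dt: "((\<lambda>t. tan ((B + e * t) / 2)) has_real_derivative inverse ((cos (B / 2))\<^sup>2) * (e / 2)) (at 0)"
  proof (rule DERIV_chain2[where f = tan])
    show "DERIV tan ((B + e * 0) / 2) :> inverse ((cos (B / 2))\<^sup>2)"
      using assms by simp
    show "((\<lambda>t. (B + e * t) / 2) has_real_derivative e / 2) (at 0)"
      by (auto intro!: derivative_eq_intros)
  qed
  have "((\<lambda>t. ((P + k1 * t) + (Q + k2 * t)) * tan ((B + e * t) / 2)) has_real_derivative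
     (k1 + k2) * tan ((B + e * 0) / 2) + ((P + k1 * 0) + (Q + k2 * 0)) * (inverse ((cos (B / 2))\<^sup>2) * (e / 2))) (at 0)"
    by (rule DERIV_mult[THEN DERIV_cong]) (use assms in \<open>auto intro!: derivative_eq_intros dt\<close>)
  then show ?thesis by (simp only: mult_zero_right add_0_right inv_aux)
qed

lemma Floc_deriv:
  assumes "3 \<le> n" "\<forall>i<n. cos (adiff n x i / 2) \<noteq> 0"
  shows "((\<lambda>t. Floc n (x(m := x m + t))) has_real_derivative FD n x m) (at 0)"
proof -
  have n2: "2 \<le> n" using assms by simp
  have e: "(\<lambda>t. Floc n (x(m := x m + t))) = (\<lambda>t. \<Sum>i<n.
     ((pc n x i + of_bool (m = n + i) * t) + (pc n x (nxt n i) + of_bool (m = n + nxt n i) * t))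
       * tan ((adiff n x i + (of_bool (m = nxt n i) - of_bool (m = i)) * t) / 2))"
    unfolding Floc_def
    by (intro ext sum.cong refl) (simp only: lessThan_iff adiff_upd[OF _ n2] pc_upd, simp add: algebra_simps)
  show ?thesis unfolding e FD_def
  proof (rule DERIV_sum)
    fix i assume "i \<in> {..<n}"
    then have c: "cos (adiff n x i / 2) \<noteq> 0" using assms by simp
    show "((\<lambda>t. ((pc n x i + of_bool (m = n + i) * t) + (pc n x (nxt n i) + of_bool (m = n + nxt n i) * t))
       * tan ((adiff n x i + (of_bool (m = nxt n i) - of_bool (m = i)) * t) / 2)) has_real_derivative
       (of_bool (m = n + i) + of_bool (m = n + nxt n i)) * tan (adiff n x i / 2)
      + (pc n x i + pc n x (nxt n i)) * ((of_bool (m = nxt n i) - of_bool (m = i)) / (2 * (cos (adiff n x i / 2))\<^sup>2))) (at 0)"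
      by (rule term_deriv[OF c])
  qed
qed

lemma adiff_half_cos:
  assumes "0 < a" "a < pi" shows "0 < cos (a / 2)" "0 < sin (a / 2)" "sin a > 0"
  using assms by (auto intro!: cos_gt_zero_pi sin_gt_zero)

lemma Pn_cont_side:
  assumes "3 \<le> n" "i < n" "sin (adiff n x i) \<noteq> 0" "sin (adiff n x (prv n i)) \<noteq> 0"
  shows "isCont (\<lambda>t. side_len n (x(m := x m + t)) i) 0"
proof -
  have n2: "2 \<le> n" using assms by simp
  have pl: "prv n i < n" using assms by (simp add: prv_lt)
  have e: "(\<lambda>t. side_len n (x(m := x m + t)) i) = (\<lambda>t.
     ((pc n x (nxt n i) + t * of_bool (m = n + nxt n i)) - (pc n x i + t * of_bool (m = n + i)) * cos (adiff n x i + t * (of_bool (m = nxt n i) - of_bool (m = i))))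
        / sin (adiff n x i + t * (of_bool (m = nxt n i) - of_bool (m = i)))
   + ((pc n x (prv n i) + t * of_bool (m = n + prv n i)) - (pc n x i + t * of_bool (m = n + i)) * cos (adiff n x (prv n i) + t * (of_bool (m = nxt n (prv n i)) - of_bool (m = prv n i))))
        / sin (adiff n x (prv n i) + t * (of_bool (m = nxt n (prv n i)) - of_bool (m = prv n i))))"
    by (intro ext) (simp only: side_len_formula[OF assms(2,1)] adiff_upd[OF assms(2) n2] adiff_upd[OF pl n2] pc_upd)
  show ?thesis unfolding e using assms(3,4)
    by (auto intro!: continuous_intros)
qed

lemma eventually_Pn:
  assumes "3 \<le> n" "x \<in> Pn n"
  shows "eventually (\<lambda>t. x(m := x m + t) \<in> Pn n) (nhds 0)"
proof -
  have n2: "2 \<le> n" using assms by simp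
  have A: "\<forall>i<n. 0 < adiff n x i \<and> adiff n x i < pi" and S: "\<forall>i<n. 0 < side_len n x i"
    using assms by (auto simp: Pn_def)
  have s: "sin (adiff n x i) \<noteq> 0" if "i < n" for i
    using A that adiff_half_cos(3)[of "adiff n x i"] by auto
  have "\<forall>i\<in>{..<n}. eventually (\<lambda>t. (0 < adiff n (x(m := x m + t)) i \<and> adiff n (x(m := x m + t)) i < pi)
       \<and> 0 < side_len n (x(m := x m + t)) i) (at 0)"
  proof
    fix i assume "i \<in> {..<n}"
    then have i: "i < n" by simp
    have pl: "prv n i < n" using i assms by (simp add: prv_lt)
    let ?f = "\<lambda>t. adiff n x i + t * (of_bool (m = nxt n i) - of_bool (m = i))"
    have tf: "(?f \<longlongrightarrow> adiff n x i) (at 0)"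
      by (auto intro!: tendsto_eq_intros)
    have ts: "((\<lambda>t. side_len n (x(m := x m + t)) i) \<longlongrightarrow> side_len n x i) (at 0)"
    proof -
      have "isCont (\<lambda>t. side_len n (x(m := x m + t)) i) 0"
        by (rule Pn_cont_side[OF assms(1) i s[OF i] s[OF pl]])
      then show ?thesis
        by (simp add: isCont_def)
    qed
    have a1: "0 < adiff n x i" "adiff n x i < pi" "0 < side_len n x i" using A S i by auto
    have e1: "eventually (\<lambda>t. 0 < ?f t) (at 0)" by (rule order_tendstoD(1)[OF tf a1(1)])
    have e2: "eventually (\<lambda>t. ?f t < pi) (at 0)" by (rule order_tendstoD(2)[OF tf a1(2)])
    have e3: "eventually (\<lambda>t. 0 < side_len n (x(m := x m + t)) i) (at 0)"
      by (rule order_tendstoD(1)[OF ts a1(3)])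
    show "eventually (\<lambda>t. (0 < adiff n (x(m := x m + t)) i \<and> adiff n (x(m := x m + t)) i < pi)
       \<and> 0 < side_len n (x(m := x m + t)) i) (at 0)"
      unfolding adiff_upd[OF i n2]
      by (rule eventually_mono[OF eventually_conj[OF eventually_conj[OF e1 e2] e3]]) blast
  qed
  then have "eventually (\<lambda>t. \<forall>i\<in>{..<n}. (0 < adiff n (x(m := x m + t)) i \<and> adiff n (x(m := x m + t)) i < pi)
       \<and> 0 < side_len n (x(m := x m + t)) i) (at 0)"
    by (rule eventually_ball_finite[OF finite_lessThan])
  then have "eventually (\<lambda>t. x(m := x m + t) \<in> Pn n) (at 0)"
    by (rule eventually_mono) (simp only: Pn_def mem_Collect_eq lessThan_iff, blast)
  moreover have "x(m := x m + 0) \<in> Pn n" using assms by (simp only: add_0_right fun_upd_triv)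
  ultimately show ?thesis by (intro iffD2[OF eventually_nhds_conv_at] conjI)
qed

lemma Pn_perimeter:
  assumes "3 \<le> n" "y \<in> Pn n" shows "perimeter n y = Floc n y"
proof (rule perimeter_Floc[OF assms(1)], intro allI impI conjI)
  fix i assume i: "i < n"
  then have "0 < adiff n y i" "adiff n y i < pi" "0 < side_len n y i" using assms by (auto simp: Pn_def)
  then show "sin (adiff n y i) \<noteq> 0" "0 \<le> side_len n y i" using adiff_half_cos(3)[of "adiff n y i"] by auto
qed

lemma pd_perimeter:
  assumes "3 \<le> n" "x \<in> Pn n"
  shows "pd (perimeter n) x m = FD n x m"
proof -
  have c: "\<forall>i<n. cos (adiff n x i / 2) \<noteq> 0"
  proof (intro allI impI)
    fix i assume "i < n"
    then have "0 < adiff n x i" "adiff n x i < pi" using assms(2) unfolding Pn_def by blast+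
    then show "cos (adiff n x i / 2) \<noteq> 0" using adiff_half_cos(1) by force
  qed
  have "((\<lambda>t. perimeter n (x(m := x m + t))) has_real_derivative FD n x m) (at 0)"
  proof (subst DERIV_cong_ev[OF refl _ refl])
    show "eventually (\<lambda>t. perimeter n (x(m := x m + t)) = Floc n (x(m := x m + t))) (nhds 0)"
      by (rule eventually_mono[OF eventually_Pn[OF assms, of m]]) (rule Pn_perimeter[OF assms(1)])
    show "((\<lambda>t. Floc n (x(m := x m + t))) has_real_derivative FD n x m) (at 0)"
      by (rule Floc_deriv[OF assms(1) c])
  qed
  then show ?thesis unfolding pd_def by (rule DERIV_imp_deriv)
qed

lemma FD_alpha:
  assumes "3 \<le> n" "m < n"
  shows "FD n x m = (pc n x (prv n m) + pc n x m) / (2 * (cos (adiff n x (prv n m) / 2))\<^sup>2)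
     - (pc n x m + pc n x (nxt n m)) / (2 * (cos (adiff n x m / 2))\<^sup>2)"
proof -
  let ?f = "\<lambda>i. (pc n x i + pc n x (nxt n i)) / (2 * (cos (adiff n x i / 2))\<^sup>2)"
  have "FD n x m = (\<Sum>i<n. of_bool (m = nxt n i) * ?f i) - (\<Sum>i<n. of_bool (m = i) * ?f i)"
    unfolding FD_def sum_subtractf[symmetric]
  proof (intro sum.cong refl)
    fix i assume "i \<in> {..<n}"
    have z1: "of_bool (m = n + i) = (0::real)" "of_bool (m = n + nxt n i) = (0::real)" using assms by auto
    show "(of_bool (m = n + i) + of_bool (m = n + nxt n i)) * tan (adiff n x i / 2)
      + (pc n x i + pc n x (nxt n i)) * ((of_bool (m = nxt n i) - of_bool (m = i)) / (2 * (cos (adiff n x i / 2))\<^sup>2))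
      = of_bool (m = nxt n i) * ?f i - of_bool (m = i) * ?f i"
      unfolding z1 distr_e by (simp only: add_0_left mult_zero_left)
  qed
  also have "\<dots> = ?f (prv n m) - ?f m"
    by (simp only: sum_delta_nxt[OF assms(2)] sum_delta_eq[OF assms(2)])
  finally show ?thesis using assms by (simp add: nxt_prv)
qed

lemma FD_p:
  assumes "3 \<le> n" "k < n"
  shows "FD n x (n + k) = tan (adiff n x k / 2) + tan (adiff n x (prv n k) / 2)"
proof -
  let ?f = "\<lambda>i. tan (adiff n x i / 2)"
  have "FD n x (n + k) = (\<Sum>i<n. of_bool (k = i) * ?f i) + (\<Sum>i<n. of_bool (k = nxt n i) * ?f i)"
    unfolding FD_def sum.distrib[symmetric]
  proof (intro sum.cong refl)
    fix i assume "i \<in> {..<n}"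
    then have i: "i < n" by simp
    have z1: "of_bool (n + k = nxt n i) = (0::real)" "of_bool (n + k = i) = (0::real)"
      "of_bool (n + k = n + i) = (of_bool (k = i) :: real)" "of_bool (n + k = n + nxt n i) = (of_bool (k = nxt n i) :: real)"
      using assms i nxt_lt[of n i] by auto
    show "(of_bool (n + k = n + i) + of_bool (n + k = n + nxt n i)) * tan (adiff n x i / 2)
      + (pc n x i + pc n x (nxt n i)) * ((of_bool (n + k = nxt n i) - of_bool (n + k = i)) / (2 * (cos (adiff n x i / 2))\<^sup>2))
      = of_bool (k = i) * ?f i + of_bool (k = nxt n i) * ?f i"
      unfolding z1 by (simp only: diff_self div_0 mult_zero_right add_0_right distrib_right)
  qed
  also have "\<dots> = ?f k + ?f (prv n k)"
    by (simp only: sum_delta_nxt[OF assms(2)] sum_delta_eq[OF assms(2)])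
  finally show ?thesis .
qed


lemma Pn_ang:
  assumes "x \<in> Pn n" "i < n"
  shows "0 < adiff n x i" "adiff n x i < pi"
  using assms unfolding Pn_def by blast+

lemma Pn_cos: assumes "x \<in> Pn n" "i < n" shows "cos (adiff n x i / 2) \<noteq> 0"
  using adiff_half_cos(1)[OF Pn_ang[OF assms]] by simp

lemma Pn_tq: assumes "x \<in> Pn n" "i < n" shows "0 < tq (adiff n x i)"
  unfolding tq_def using Pn_ang[OF assms] by (intro tan_gt_zero) simp_all

lemma sum_ob: "(c::nat) < N \<Longrightarrow> (\<Sum>k<N. f k * of_bool (k = c)) = (f c :: real)"
proof -
  assume a: "c < N"
  have "(\<Sum>k<N. f k * of_bool (k = c)) = f c * of_bool (c = c) + (\<Sum>k\<in>{..<N} - {c}. f k * of_bool (k = c))"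
    using a by (subst sum.remove[of _ c]) auto
  also have "(\<Sum>k\<in>{..<N} - {c}. f k * of_bool (k = c)) = 0"
    by (rule sum.neutral) auto
  finally show ?thesis by simp
qed

lemma xi_split: "i < n \<Longrightarrow> xi n i x m = of_bool (m = i) + Phi n x i * of_bool (m = n + i)"
  by (auto simp: xi_def)

lemma sum_xi:
  assumes "i < n"
  shows "(\<Sum>m<2 * n. h m * xi n i x m) = h i + Phi n x i * h (n + i)"
proof -
  have "(\<Sum>m<2 * n. h m * xi n i x m) = (\<Sum>m<2 * n. h m * of_bool (m = i) + Phi n x i * (h m * of_bool (m = n + i)))"
    by (rule sum.cong) (simp_all add: xi_split[OF assms] algebra_simps)
  also have "\<dots> = (\<Sum>m<2 * n. h m * of_bool (m = i)) + Phi n x i * (\<Sum>m<2 * n. h m * of_bool (m = n + i))"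
    by (simp only: sum.distrib sum_distrib_left)
  also have "\<dots> = h i + Phi n x i * h (n + i)"
  proof -
    have l: "i < 2 * n" "n + i < 2 * n" using assms by simp_all
    show ?thesis by (simp only: sum_ob[OF l(1)] sum_ob[OF l(2)])
  qed
  finally show ?thesis .
qed

lemma pd_xi:
  assumes "j < n"
  shows "pd (\<lambda>y. xi n j y k) x m = of_bool (k = n + j) * pd (\<lambda>y. Phi n y j) x m"
proof -
  consider "k = j" | "k = n + j" | "k \<noteq> j" "k \<noteq> n + j" by blast
  then show ?thesis
  proof cases
    case 1
    then have "k \<noteq> n + j" using assms by simp
    then show ?thesis using 1 by (simp add: xi_def pd_def)
  next
    case 2
    then have "k \<noteq> j" using assms by simp
    then show ?thesis using 2 by (simp add: xi_def)
  next
    case 3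
    then show ?thesis by (simp add: xi_def pd_def)
  qed
qed

definition U :: "nat \<Rightarrow> (nat \<Rightarrow> real) \<Rightarrow> nat \<Rightarrow> nat \<Rightarrow> real" where
  "U n x i j = pd (\<lambda>y. Phi n y j) x i + Phi n x i * pd (\<lambda>y. Phi n y j) x (n + i)"

lemma lie_formula:
  assumes "i < n" "j < n"
  shows "lie n (xi n i) (xi n j) x k = of_bool (k = n + j) * U n x i j - of_bool (k = n + i) * U n x j i"
proof -
  have "lie n (xi n i) (xi n j) x k = (\<Sum>m<2 * n. pd (\<lambda>y. xi n j y k) x m * xi n i x m) - (\<Sum>m<2 * n. pd (\<lambda>y. xi n i y k) x m * xi n j x m)"
    unfolding lie_def by (simp add: sum_subtractf algebra_simps)
  also have "\<dots> = of_bool (k = n + j) * U n x i j - of_bool (k = n + i) * U n x j i"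
    unfolding sum_xi[OF assms(1)] sum_xi[OF assms(2)] pd_xi[OF assms(1)] pd_xi[OF assms(2)] U_def
    by (simp add: algebra_simps)
  finally show ?thesis .
qed

lemma sum_FD_lie:
  assumes "i < n" "j < n"
  shows "(\<Sum>k<2 * n. FD n x k * lie n (xi n i) (xi n j) x k) = FD n x (n + j) * U n x i j - FD n x (n + i) * U n x j i"
proof -
  have "(\<Sum>k<2 * n. FD n x k * lie n (xi n i) (xi n j) x k)
     = (\<Sum>k<2 * n. FD n x k * of_bool (k = n + j)) * U n x i j - (\<Sum>k<2 * n. FD n x k * of_bool (k = n + i)) * U n x j i"
    unfolding lie_formula[OF assms] right_diff_distrib sum_subtractf sum_distrib_right mult.assoc
    by (simp only: mult.commute mult.left_commute)
  also have "\<dots> = FD n x (n + j) * U n x i j - FD n x (n + i) * U n x j i"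
  proof -
    have l: "n + j < 2 * n" "n + i < 2 * n" using assms by simp_all
    show ?thesis by (simp only: sum_ob[OF l(1)] sum_ob[OF l(2)])
  qed
  finally show ?thesis .
qed


lemma T1_alg:
  fixes u v p0 p1 p2 :: real
  assumes "u + v \<noteq> 0"
  shows "(p0 + p1) * (1 + u\<^sup>2) / 2 - (p1 + p2) * (1 + v\<^sup>2) / 2 + Gf u v p2 p1 p0 * (v + u) = 0"
proof -
  have d: "2 * u + 2 * v \<noteq> 0" using assms by simp
  show ?thesis unfolding Gf_def using assms d
    by (simp add: divide_simps) algebra
qed

lemma T2_alg:
  fixes a b c p0 p1 p2 p3 :: real
  assumes "a + b \<noteq> 0" "b + c \<noteq> 0"
  shows "(c + b) * (- ((1 + b\<^sup>2) / 2) * GU b c p3 p2 p1 + Gf a b p2 p1 p0 * GP b c)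
       - (b + a) * ((1 + b\<^sup>2) / 2 * GV a b p2 p1 p0 + Gf b c p3 p2 p1 * GN a b) = 0"
proof -
  have d: "2 * a + 2 * b \<noteq> 0" "2 * b + 2 * c \<noteq> 0" using assms by simp_all
  show ?thesis unfolding Gf_def GU_def GV_def GN_def GP_def using assms d
    by (simp add: divide_simps) algebra
qed

lemma div_aux: "(X::real) / (2 * c) = X * inverse c / 2"
  by (simp add: field_split_simps)
lemma div_cos_sq: "cos (y::real) \<noteq> 0 \<Longrightarrow> X / (2 * (cos y)\<^sup>2) = X * (1 + (tan y)\<^sup>2) / 2"
  unfolding div_aux by (simp add: sec_sq)

context
  fixes n :: nat and x :: "nat \<Rightarrow> real"
  assumes n3: "3 \<le> n" and xP: "x \<in> Pn n"
begin

lemma n0: "0 < n" using n3 by simp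

lemma FD_alpha_T:
  assumes "m < n"
  shows "FD n x m = (pc n x (prv n m) + pc n x m) * (1 + (tq (adiff n x (prv n m)))\<^sup>2) / 2
     - (pc n x m + pc n x (nxt n m)) * (1 + (tq (adiff n x m))\<^sup>2) / 2"
  unfolding FD_alpha[OF n3 assms] tq_def
  using Pn_cos[OF xP prv_lt[OF n0, of m]] Pn_cos[OF xP assms] by (simp add: div_cos_sq)

lemma FD_p_T:
  assumes "k < n"
  shows "FD n x (n + k) = tq (adiff n x k) + tq (adiff n x (prv n k))"
  unfolding FD_p[OF n3 assms] tq_def ..

lemma Phi_G:
  assumes "i < n"
  shows "Phi n x i = Gf (tq (adiff n x (prv n i))) (tq (adiff n x i)) (pc n x (nxt n i)) (pc n x i) (pc n x (prv n i))"
  unfolding Phi_PhiF tq_def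
  by (rule PhiF_G[OF Pn_cos[OF xP prv_lt[OF n0, of i]] Pn_cos[OF xP assms]])

lemma pd_Phi_x:
  assumes "j < n"
  shows "pd (\<lambda>y. Phi n y j) x m =
    (1 + (tq (adiff n x (prv n j)))\<^sup>2) * ((of_bool (m = j) - of_bool (m = prv n j)) / 2) * GU (tq (adiff n x (prv n j))) (tq (adiff n x j)) (pc n x (nxt n j)) (pc n x j) (pc n x (prv n j))
  + (1 + (tq (adiff n x j))\<^sup>2) * ((of_bool (m = nxt n j) - of_bool (m = j)) / 2) * GV (tq (adiff n x (prv n j))) (tq (adiff n x j)) (pc n x (nxt n j)) (pc n x j) (pc n x (prv n j))
  + of_bool (m = n + nxt n j) * GN (tq (adiff n x (prv n j))) (tq (adiff n x j))
  + of_bool (m = n + j) * GM (tq (adiff n x (prv n j))) (tq (adiff n x j))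
  + of_bool (m = n + prv n j) * GP (tq (adiff n x (prv n j))) (tq (adiff n x j))"
proof (rule pd_Phi[OF assms n3 Pn_cos[OF xP prv_lt[OF n0, of j]] Pn_cos[OF xP assms]])
  show "tq (adiff n x (prv n j)) + tq (adiff n x j) \<noteq> 0"
    using Pn_tq[OF xP prv_lt[OF n0, of j]] Pn_tq[OF xP assms] by simp
qed

lemma U_adj1:
  assumes "i < n"
  shows "U n x i (nxt n i) = - ((1 + (tq (adiff n x i))\<^sup>2) / 2) * GU (tq (adiff n x i)) (tq (adiff n x (nxt n i))) (pc n x (nxt n (nxt n i))) (pc n x (nxt n i)) (pc n x i)
     + Phi n x i * GP (tq (adiff n x i)) (tq (adiff n x (nxt n i)))"
proof -
  have nl: "nxt n i < n" by (rule nxt_lt[OF n0])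
  have f: "prv n (nxt n i) = i" "nxt n i \<noteq> i" "i \<noteq> nxt n i" "nxt n (nxt n i) \<noteq> i" "i \<noteq> nxt n (nxt n i)"
    using prv_nxt[OF assms] nxt_neq[OF n3 assms] nxt_neq[OF n3 nl] nxt_neq_prv[OF n3 nl] prv_nxt[OF assms]
    by auto
  have g: "i \<noteq> n + k" "n + i \<noteq> k" if "k < n" for k using assms that by auto
  show ?thesis
    unfolding U_def pd_Phi_x[OF nl] using f g[OF nl] g[OF assms] g[OF nxt_lt[OF n0, of "nxt n i"]] nl
    by (simp add: f)
qed

lemma U_adj2:
  assumes "i < n"
  shows "U n x (nxt n i) i = (1 + (tq (adiff n x i))\<^sup>2) / 2 * GV (tq (adiff n x (prv n i))) (tq (adiff n x i)) (pc n x (nxt n i)) (pc n x i) (pc n x (prv n i))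
     + Phi n x (nxt n i) * GN (tq (adiff n x (prv n i))) (tq (adiff n x i))"
proof -
  have nl: "nxt n i < n" by (rule nxt_lt[OF n0])
  have pl: "prv n i < n" by (rule prv_lt[OF n0, of i])
  have f: "nxt n i \<noteq> i" "nxt n i \<noteq> prv n i"
    using nxt_neq[OF n3 assms] nxt_neq_prv[OF n3 assms] by auto
  have g: "nxt n i \<noteq> n + k" "n + nxt n i \<noteq> k" if "k < n" for k using nl that by auto
  show ?thesis
    unfolding U_def pd_Phi_x[OF assms] using f g[OF pl] g[OF assms] g[OF nl]
    by simp
qed

lemma U_far:
  assumes "i < n" "j < n" "i \<noteq> j" "i \<noteq> nxt n j" "i \<noteq> prv n j"
  shows "U n x i j = 0"
proof -
  have nl: "nxt n j < n" by (rule nxt_lt[OF n0, of j])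
  have pl: "prv n j < n" by (rule prv_lt[OF n0, of j])
  have g: "i \<noteq> n + k" "n + i \<noteq> k" if "k < n" for k using assms that by auto
  show ?thesis
    unfolding U_def pd_Phi_x[OF assms(2)] using assms g[OF pl] g[OF assms(2)] g[OF nl]
    by simp
qed

lemma dF_xi:
  assumes "i < n"
  shows "(\<Sum>j<2 * n. FD n x j * xi n i x j) = 0"
proof -
  have pl: "prv n i < n" by (rule prv_lt[OF n0, of i])
  have "(\<Sum>j<2 * n. FD n x j * xi n i x j) = FD n x i + Phi n x i * FD n x (n + i)"
    by (rule sum_xi[OF assms])
  also have "\<dots> = 0"
    unfolding FD_alpha_T[OF assms] FD_p_T[OF assms] Phi_G[OF assms]
    by (rule T1_alg) (use Pn_tq[OF xP pl] Pn_tq[OF xP assms] in simp)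
  finally show ?thesis .
qed

lemma dF_adj:
  assumes "i < n"
  shows "FD n x (n + nxt n i) * U n x i (nxt n i) - FD n x (n + i) * U n x (nxt n i) i = 0"
proof -
  have nl: "nxt n i < n" by (rule nxt_lt[OF n0])
  have pl: "prv n i < n" by (rule prv_lt[OF n0, of i])
  have nnl: "nxt n (nxt n i) < n" by (rule nxt_lt[OF n0])
  have pn: "prv n (nxt n i) = i" by (rule prv_nxt[OF assms])
  show ?thesis
    unfolding U_adj1[OF assms] U_adj2[OF assms] FD_p_T[OF nl] FD_p_T[OF assms] Phi_G[OF assms] Phi_G[OF nl] pn
    by (rule T2_alg) (use Pn_tq[OF xP pl] Pn_tq[OF xP assms] Pn_tq[OF xP nl] in simp)+
qed

lemma dF_lie:
  assumes "i < n" "j < n"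
  shows "(\<Sum>k<2 * n. FD n x k * lie n (xi n i) (xi n j) x k) = 0"
proof -
  have "FD n x (n + j) * U n x i j - FD n x (n + i) * U n x j i = 0"
  proof -
    consider "i = j" | "j = nxt n i" | "i = nxt n j" | "i \<noteq> j" "j \<noteq> nxt n i" "i \<noteq> nxt n j" by blast
    then show ?thesis
    proof cases
      case 1 then show ?thesis by simp
    next
      case 2 then show ?thesis using dF_adj[OF assms(1)] by simp
    next
      case 3 then show ?thesis using dF_adj[OF assms(2)] by simp
    next
      case 4
      have a: "i \<noteq> prv n j" using 4 nxt_prv[OF assms(2)] by auto
      have b: "j \<noteq> prv n i" using 4 nxt_prv[OF assms(1)] by auto
      show ?thesis using U_far[OF assms 4(1) 4(3) a] U_far[OF assms(2,1) 4(1)[symmetric] 4(2) b] by simp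
    qed
  qed
  then show ?thesis using sum_FD_lie[OF assms] by simp
qed

end


lemma sum_if_eq: "(\<Sum>i<(N::nat). if i = m then f i else (0::real)) = (if m < N then f m else 0)"
  by (simp add: sum.delta)

definition comb :: "nat \<Rightarrow> (nat \<Rightarrow> real) \<Rightarrow> (nat \<Rightarrow> real) \<Rightarrow> (nat \<Rightarrow> nat \<Rightarrow> real) \<Rightarrow> nat \<Rightarrow> real" where
  "comb n x c d k = (\<Sum>i<n. c i * xi n i x k) + (\<Sum>i<n. \<Sum>j<n. d i j * lie n (xi n i) (xi n j) x k)"

lemma comb_ker:
  assumes n3: "3 \<le> n" and xP: "x \<in> Pn n"
  shows "(\<Sum>k<2 * n. FD n x k * comb n x c d k) = 0"
proof -
  have "(\<Sum>k<2 * n. FD n x k * comb n x c d k)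
     = (\<Sum>k<2 * n. \<Sum>i<n. c i * (FD n x k * xi n i x k)) + (\<Sum>k<2 * n. \<Sum>i<n. \<Sum>j<n. d i j * (FD n x k * lie n (xi n i) (xi n j) x k))"
    unfolding comb_def distrib_left sum.distrib sum_distrib_left by (simp add: mult.left_commute)
  also have "\<dots> = (\<Sum>i<n. c i * (\<Sum>k<2 * n. FD n x k * xi n i x k)) + (\<Sum>i<n. \<Sum>j<n. d i j * (\<Sum>k<2 * n. FD n x k * lie n (xi n i) (xi n j) x k))"
  proof -
    have 1: "(\<Sum>k<2 * n. \<Sum>i<n. c i * (FD n x k * xi n i x k)) = (\<Sum>i<n. c i * (\<Sum>k<2 * n. FD n x k * xi n i x k))"
      by (subst sum.swap) (simp add: sum_distrib_left)
    have 2: "(\<Sum>k<2 * n. \<Sum>i<n. \<Sum>j<n. d i j * (FD n x k * lie n (xi n i) (xi n j) x k))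
       = (\<Sum>i<n. \<Sum>j<n. d i j * (\<Sum>k<2 * n. FD n x k * lie n (xi n i) (xi n j) x k))"
      by (subst sum.swap) (simp add: sum_distrib_left sum.swap[of _ "{..<2 * n}"])
    show ?thesis using 1 2 by simp
  qed
  also have "\<dots> = 0"
    using dF_xi[OF n3 xP] dF_lie[OF n3 xP] by simp
  finally show ?thesis .
qed

primrec dseq :: "(nat \<Rightarrow> real) \<Rightarrow> (nat \<Rightarrow> real) \<Rightarrow> (nat \<Rightarrow> real) \<Rightarrow> nat \<Rightarrow> real" where
  "dseq r a w 0 = - r 0 / w 0"
| "dseq r a w (Suc k) = (a k * dseq r a w k - r (Suc k)) / w (Suc k)"

lemma dseq_prop:
  assumes "\<And>k. Suc k < n \<Longrightarrow> w k \<noteq> 0" "Suc m < n"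
  shows "(if 0 < m then dseq r a w (m - 1) * a (m - 1) else 0) - dseq r a w m * w m = r m"
proof (cases m)
  case 0 then show ?thesis using assms by simp
next
  case (Suc k)
  then have "w (Suc k) \<noteq> 0" using assms by simp
  then show ?thesis using Suc by (simp add: field_simps)
qed

lemma comb_alpha:
  assumes "k < n"
  shows "comb n x c (\<lambda>i j. if j = Suc i then e i else 0) k = c k"
proof -
  have 1: "(\<Sum>i<n. c i * xi n i x k) = c k"
  proof -
    have "(\<Sum>i<n. c i * xi n i x k) = (\<Sum>i<n. if i = k then c i else 0)"
      by (rule sum.cong) (use assms in \<open>auto simp: xi_def\<close>)
    then show ?thesis using assms by (simp add: sum_if_eq)
  qed
  have 2: "lie n (xi n i) (xi n j) x k = 0" if "i < n" "j < n" for i j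
    using lie_formula[OF that, of x k] assms by simp
  show ?thesis unfolding comb_def 1 using 2 by simp
qed

lemma comb_p:
  assumes "m < n"
  shows "comb n x c (\<lambda>i j. if j = Suc i then e i else 0) (n + m) = c m * Phi n x m
     + ((if 0 < m then e (m - 1) * U n x (m - 1) m else 0) - (if Suc m < n then e m * U n x (Suc m) m else 0))"
proof -
  have 1: "(\<Sum>i<n. c i * xi n i x (n + m)) = c m * Phi n x m"
  proof -
    have "(\<Sum>i<n. c i * xi n i x (n + m)) = (\<Sum>i<n. if i = m then c i * Phi n x i else 0)"
      by (rule sum.cong) (use assms in \<open>auto simp: xi_def\<close>)
    then show ?thesis using assms by (simp add: sum_if_eq)
  qed
  have 2: "(\<Sum>j<n. (if j = Suc i then e i else 0) * lie n (xi n i) (xi n j) x (n + m))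
     = (if Suc i < n then e i * (of_bool (m = Suc i) * U n x i (Suc i) - of_bool (m = i) * U n x (Suc i) i) else 0)"
    if "i < n" for i
  proof -
    have "(\<Sum>j<n. (if j = Suc i then e i else 0) * lie n (xi n i) (xi n j) x (n + m))
       = (\<Sum>j<n. if j = Suc i then e i * lie n (xi n i) (xi n j) x (n + m) else 0)"
      by (rule sum.cong) auto
    also have "\<dots> = (if Suc i < n then e i * lie n (xi n i) (xi n (Suc i)) x (n + m) else 0)"
      by (simp add: sum_if_eq)
    also have "\<dots> = (if Suc i < n then e i * (of_bool (m = Suc i) * U n x i (Suc i) - of_bool (m = i) * U n x (Suc i) i) else 0)"
      using lie_formula[OF that, of "Suc i" x "n + m"] by auto
    finally show ?thesis .
  qed
  have 3: "(\<Sum>i<n. (if Suc i < n then e i * (of_bool (m = Suc i) * U n x i (Suc i) - of_bool (m = i) * U n x (Suc i) i) else 0))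
     = (\<Sum>i<n. (if i = m - 1 then (if 0 < m then e i * U n x i (Suc i) else 0) else 0))
       - (\<Sum>i<n. (if i = m then (if Suc i < n then e i * U n x (Suc i) i else 0) else 0))"
    unfolding sum_subtractf[symmetric]
    by (rule sum.cong) (use assms in auto)
  have 4: "(\<Sum>i<n. (if i = m - 1 then (if 0 < m then e i * U n x i (Suc i) else 0) else 0))
      = (if 0 < m then e (m - 1) * U n x (m - 1) m else 0)"
    using assms by (simp add: sum_if_eq)
  have 5: "(\<Sum>i<n. (if i = m then (if Suc i < n then e i * U n x (Suc i) i else 0) else 0))
      = (if Suc m < n then e m * U n x (Suc m) m else 0)"
    using assms by (simp add: sum_if_eq)
  show ?thesis unfolding comb_def 1 using 2 3 4 5 by simp
qed

lemma DPB_eq: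
  assumes n3: "3 \<le> n" and xP: "x \<in> Pn n" and wnz: "\<forall>k. Suc k < n \<longrightarrow> U n x (Suc k) k \<noteq> 0"
  shows "D_plus_bracket n x = tangent_Cn n x"
proof -
  have tc: "tangent_Cn n x = {v. (\<Sum>j<2 * n. FD n x j * v j) = 0}"
    unfolding tangent_Cn_def pd_perimeter[OF n3 xP] ..
  have dp: "D_plus_bracket n x = {v. \<exists>c d. \<forall>k<2 * n. v k = comb n x c d k}"
    unfolding D_plus_bracket_def comb_def ..
  show ?thesis unfolding tc dp
  proof (intro set_eqI iffI)
    fix v assume "v \<in> {v. \<exists>c d. \<forall>k<2 * n. v k = comb n x c d k}"
    then obtain c d where cd: "\<forall>k<2 * n. v k = comb n x c d k" by blast
    have "(\<Sum>j<2 * n. FD n x j * v j) = (\<Sum>j<2 * n. FD n x j * comb n x c d j)"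
      by (rule sum.cong) (use cd in auto)
    also have "\<dots> = 0" by (rule comb_ker[OF n3 xP])
    finally show "v \<in> {v. (\<Sum>j<2 * n. FD n x j * v j) = 0}" by simp
  next
    fix v assume "v \<in> {v. (\<Sum>j<2 * n. FD n x j * v j) = 0}"
    then have hv: "(\<Sum>j<2 * n. FD n x j * v j) = 0" by simp
    define r where "r m = v (n + m) - v m * Phi n x m" for m
    define a where "a k = U n x k (Suc k)" for k
    define w where "w k = U n x (Suc k) k" for k
    define e where "e = dseq r a w"
    define d where "d = (\<lambda>i j. if j = Suc i then e i else (0::real))"
    define z where "z = comb n x v d"
    have wn: "w k \<noteq> 0" if "Suc k < n" for k using wnz that by (simp add: w_def)
    have zl: "z k = v k" if "k < n" for k unfolding z_def d_def by (rule comb_alpha[OF that])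
    have zp: "z (n + m) = v (n + m)" if "Suc m < n" for m
    proof -
      have "z (n + m) = v m * Phi n x m + ((if 0 < m then e (m - 1) * a (m - 1) else 0) - e m * w m)"
        unfolding z_def d_def using comb_p[of m n x v e] that by (simp add: a_def w_def)
      also have "\<dots> = v m * Phi n x m + r m"
        unfolding e_def by (simp only: dseq_prop[of n w m r a, OF wn that])
      finally show ?thesis by (simp add: r_def)
    qed
    have zv: "z k = v k" if "k < 2 * n" "k \<noteq> n + (n - 1)" for k
    proof (cases "k < n")
      case True then show ?thesis by (rule zl)
    next
      case False
      define m where "m = k - n"
      have m: "k = n + m" "Suc m < n" using False that unfolding m_def by linarith+
      show ?thesis unfolding m(1) by (rule zp[OF m(2)])
    qed
    have "(\<Sum>k<2 * n. FD n x k * (z k - v k)) = (\<Sum>k<2 * n. FD n x k * z k) - (\<Sum>k<2 * n. FD n x k * v k)"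
      unfolding right_diff_distrib sum_subtractf ..
    also have "\<dots> = 0" using comb_ker[OF n3 xP, of v d] hv unfolding z_def[symmetric] by simp
    finally have "(\<Sum>k<2 * n. FD n x k * (z k - v k)) = 0" .
    moreover have "(\<Sum>k<2 * n. FD n x k * (z k - v k)) = (\<Sum>k<2 * n. if k = n + (n - 1) then FD n x k * (z k - v k) else 0)"
      by (rule sum.cong) (use zv in auto)
    moreover have l2: "n + (n - 1) < 2 * n" using n3 by simp
    ultimately have "FD n x (n + (n - 1)) * (z (n + (n - 1)) - v (n + (n - 1))) = 0"
      by (simp only: sum_if_eq if_True)
    moreover have "FD n x (n + (n - 1)) \<noteq> 0"
    proof -
      have l: "n - 1 < n" using n3 by simp
      have "0 < tq (adiff n x (n - 1)) + tq (adiff n x (prv n (n - 1)))"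
        using Pn_tq[OF xP l] Pn_tq[OF xP prv_lt[of n "n - 1"]] n3 by simp
      then show ?thesis unfolding FD_p_T[OF n3 xP l] by simp
    qed
    ultimately have "z (n + (n - 1)) = v (n + (n - 1))" by simp
    have "\<forall>k<2 * n. v k = comb n x v d k"
    proof (intro allI impI)
      fix k assume k: "k < 2 * n"
      show "v k = comb n x v d k"
      proof (cases "k = n + (n - 1)")
        case True then show ?thesis using \<open>z (n + (n - 1)) = v (n + (n - 1))\<close> unfolding z_def by simp
      next
        case False then show ?thesis using zv[OF k] unfolding z_def by simp
      qed
    qed
    then show "v \<in> {v. \<exists>c d. \<forall>k<2 * n. v k = comb n x c d k}" by blast
  qed
qed


definition Wfun :: "real \<Rightarrow> real \<Rightarrow> real \<Rightarrow> real \<Rightarrow> real \<Rightarrow> real \<Rightarrow> real \<Rightarrow> real" where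
  "Wfun u v w p0 p1 p2 p3 = (1 + v\<^sup>2) / 2 * GV u v p2 p1 p0 + Gf v w p3 p2 p1 * GN u v"

lemma w_eq:
  assumes n3: "3 \<le> n" and xP: "x \<in> Pn n" and k: "Suc k < n"
  shows "U n x (Suc k) k = Wfun (tq (adiff n x (prv n k))) (tq (adiff n x k)) (tq (adiff n x (nxt n k)))
     (pc n x (prv n k)) (pc n x k) (pc n x (nxt n k)) (pc n x (nxt n (nxt n k)))"
proof -
  have kl: "k < n" using k by simp
  have nk: "nxt n k = Suc k" using k by (simp add: nxt_eq)
  have nl: "nxt n k < n" using k nk by simp
  show ?thesis
    using U_adj2[OF n3 xP kl] Phi_G[OF n3 xP nl] prv_nxt[OF kl]
    unfolding Wfun_def nk by simp
qed

definition Wz :: "real \<times> real \<times> real \<times> real \<times> real \<times> real \<times> real \<Rightarrow> real" where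
  "Wz z = Wfun (fst z) (fst (snd z)) (fst (snd (snd z))) (fst (snd (snd (snd z))))
      (fst (snd (snd (snd (snd z))))) (fst (snd (snd (snd (snd (snd z)))))) (snd (snd (snd (snd (snd (snd z))))))"

lemma Wz_cont:
  assumes "0 < T"
  shows "isCont Wz (T, T, T, 1, 1, 1, 1)"
  unfolding Wz_def Wfun_def GV_def Gf_def GN_def
  using assms by (auto intro!: continuous_intros)

lemma Wz_val:
  assumes "0 < T"
  shows "Wz (T, T, T, 1, 1, 1, 1) = (1 + T\<^sup>2) / 2"
  unfolding Wz_def Wfun_def GV_def Gf_def GN_def
  using assms by (simp add: field_simps power2_eq_square)

lemma dist_pair_le: "dist (a, b) (c, d) \<le> dist a c + dist b d"
  unfolding dist_Pair_Pair
  using sqrt_sum_squares_le_sum_abs[of "dist a c" "dist b d"] by simp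

lemma Wz_pos_near:
  assumes "0 < T"
  shows "\<exists>\<delta>>0. \<forall>u v w p0 p1 p2 p3. \<bar>u - T\<bar> < \<delta> \<and> \<bar>v - T\<bar> < \<delta> \<and> \<bar>w - T\<bar> < \<delta> \<and>
     \<bar>p0 - 1\<bar> < \<delta> \<and> \<bar>p1 - 1\<bar> < \<delta> \<and> \<bar>p2 - 1\<bar> < \<delta> \<and> \<bar>p3 - 1\<bar> < \<delta> \<longrightarrow> 0 < Wfun u v w p0 p1 p2 p3"
proof -
  let ?zc = "(T, T, T, 1::real, 1::real, 1::real, 1::real)"
  have "(0::real) < (1 + T\<^sup>2) / 2" by (intro divide_pos_pos add_pos_nonneg) auto
  then have pos: "0 < Wz ?zc" using Wz_val[OF assms] by simp
  obtain d where d: "d > 0" "\<forall>z. dist z ?zc < d \<longrightarrow> dist (Wz z) (Wz ?zc) < Wz ?zc"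
    using Wz_cont[OF assms] pos unfolding continuous_at_eps_delta by blast
  show ?thesis
  proof (intro exI[of _ "d / 7"] conjI allI impI)
    show "0 < d / 7" using d by simp
    fix u v w p0 p1 p2 p3 :: real
    assume h: "\<bar>u - T\<bar> < d / 7 \<and> \<bar>v - T\<bar> < d / 7 \<and> \<bar>w - T\<bar> < d / 7 \<and>
     \<bar>p0 - 1\<bar> < d / 7 \<and> \<bar>p1 - 1\<bar> < d / 7 \<and> \<bar>p2 - 1\<bar> < d / 7 \<and> \<bar>p3 - 1\<bar> < d / 7"
    let ?z = "(u, v, w, p0, p1, p2, p3)"
    have "dist ?z ?zc \<le> dist u T + (dist v T + (dist w T + (dist p0 1 + (dist p1 1 + (dist p2 1 + dist p3 1)))))"
      by (intro order_trans[OF dist_pair_le] add_left_mono) (simp_all add: dist_pair_le)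
    also have "\<dots> < d" using h by (simp add: dist_real_def)
    finally have "dist (Wz ?z) (Wz ?zc) < Wz ?zc" using d by blast
    then have "0 < Wz ?z" by (simp add: dist_real_def abs_less_iff)
    then show "0 < Wfun u v w p0 p1 p2 p3" by (simp add: Wz_def)
  qed
qed


lemma tq_near:
  assumes "cos (th / 2) \<noteq> 0" "0 < e"
  shows "\<exists>d>0. \<forall>A. \<bar>A - th\<bar> < d \<longrightarrow> \<bar>tq A - tq th\<bar> < e"
proof -
  have "isCont tq th" unfolding tq_def using assms(1) by (auto intro!: continuous_intros)
  then obtain d where "d > 0" "\<forall>A. dist A th < d \<longrightarrow> dist (tq A) (tq th) < e"
    using assms(2) unfolding continuous_at_eps_delta by blast
  then show ?thesis by (auto simp: dist_real_def)
qed

lemma gamma_lt: "k < n \<Longrightarrow> gamma0 n t k = 2 * pi / real n * (t + real k)"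
  by (simp add: gamma0_def)
lemma gamma_ge: "\<not> k < n \<Longrightarrow> gamma0 n t k = 1"
  by (simp add: gamma0_def)

lemma adiff_near:
  assumes n3: "3 \<le> n" and i: "i < n" and h: "\<forall>k<2 * n. \<bar>x k - gamma0 n t k\<bar> < \<epsilon>"
  shows "\<bar>adiff n x i - 2 * pi / real n\<bar> < 2 * \<epsilon>"
proof (cases "i + 1 < n")
  case True
  have e: "gamma0 n t (i + 1) - gamma0 n t i = 2 * pi / real n"
  proof -
    have "real n \<noteq> 0" using True by simp
    then show ?thesis using True by (simp add: gamma_lt field_simps)
  qed
  have "\<bar>x (i + 1) - gamma0 n t (i + 1)\<bar> < \<epsilon>" "\<bar>x i - gamma0 n t i\<bar> < \<epsilon>" using h True by auto
  then show ?thesis using True e by (simp add: adiff_def abs_less_iff)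
next
  case False
  then have ii: "i = n - 1" using i by simp
  have rn: "real (n - 1) = real n - 1" using n3 by (simp add: of_nat_diff)
  have e: "gamma0 n t 0 + 2 * pi - gamma0 n t (n - 1) = 2 * pi / real n"
    using n3 by (simp add: gamma_lt rn field_simps)
  have "\<bar>x 0 - gamma0 n t 0\<bar> < \<epsilon>" "\<bar>x (n - 1) - gamma0 n t (n - 1)\<bar> < \<epsilon>" using h n3 by auto
  then show ?thesis using False ii e n3 by (simp add: adiff_def abs_less_iff)
qed

lemma pc_near:
  assumes "i < n" and h: "\<forall>k<2 * n. \<bar>x k - gamma0 n t k\<bar> < \<epsilon>"
  shows "\<bar>pc n x i - 1\<bar> < \<epsilon>"
  using h[rule_format, of "n + i"] assms by (simp add: pc_def gamma_ge)

theorem mainTheorem9: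
  fixes n :: nat
  assumes "n \<ge> 3"
  shows "\<exists>\<epsilon>>0. \<forall>x \<in> Cn n.
           (\<exists>t\<in>{0..1}. \<forall>k<2 * n. \<bar>x k - gamma0 n t k\<bar> < \<epsilon>)
             \<longrightarrow> D_plus_bracket n x = tangent_Cn n x"
proof -
  have n3: "3 \<le> n" using assms .
  have n0: "0 < n" using n3 by simp
  define th where "th = 2 * pi / real n"
  have h2: "th / 2 = pi / real n" by (simp add: th_def)
  have pn: "0 < pi / real n" using n0 by simp
  have pn2: "pi / real n < pi / 2"
  proof -
    have "real n > 2" using n3 by simp
    then show ?thesis by (simp add: field_simps)
  qed
  have T: "0 < tq th" unfolding tq_def h2 using pn pn2 by (rule tan_gt_zero)
  have C: "cos (th / 2) \<noteq> 0" unfolding h2 using pn pn2 cos_gt_zero_pi[of "pi / real n"] by simp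
  obtain \<delta> where \<delta>: "\<delta> > 0" "\<forall>u v w p0 p1 p2 p3. \<bar>u - tq th\<bar> < \<delta> \<and> \<bar>v - tq th\<bar> < \<delta> \<and> \<bar>w - tq th\<bar> < \<delta> \<and>
     \<bar>p0 - 1\<bar> < \<delta> \<and> \<bar>p1 - 1\<bar> < \<delta> \<and> \<bar>p2 - 1\<bar> < \<delta> \<and> \<bar>p3 - 1\<bar> < \<delta> \<longrightarrow> 0 < Wfun u v w p0 p1 p2 p3"
    using Wz_pos_near[OF T] by blast
  obtain d1 where d1: "d1 > 0" "\<forall>A. \<bar>A - th\<bar> < d1 \<longrightarrow> \<bar>tq A - tq th\<bar> < \<delta>"
    using tq_near[OF C \<delta>(1)] by blast
  define \<epsilon> where "\<epsilon> = min (d1 / 2) \<delta>"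
  have ep: "0 < \<epsilon>" using d1 \<delta> by (simp add: \<epsilon>_def)
  show ?thesis
  proof (intro exI[of _ \<epsilon>] conjI ballI impI)
    show "0 < \<epsilon>" by (rule ep)
    fix x assume xC: "x \<in> Cn n"
    then have xP: "x \<in> Pn n" by (simp add: Cn_def)
    assume "\<exists>t\<in>{0..1}. \<forall>k<2 * n. \<bar>x k - gamma0 n t k\<bar> < \<epsilon>"
    then obtain t where h: "\<forall>k<2 * n. \<bar>x k - gamma0 n t k\<bar> < \<epsilon>" by blast
    have tA: "\<bar>tq (adiff n x i) - tq th\<bar> < \<delta>" if "i < n" for i
    proof -
      have "\<bar>adiff n x i - th\<bar> < 2 * \<epsilon>" using adiff_near[OF n3 that h] by (simp add: th_def)
      also have "2 * \<epsilon> \<le> d1" by (simp add: \<epsilon>_def)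
      finally show ?thesis using d1(2) by blast
    qed
    have tP: "\<bar>pc n x i - 1\<bar> < \<delta>" if "i < n" for i
    proof -
      have "\<bar>pc n x i - 1\<bar> < \<epsilon>" by (rule pc_near[OF that h])
      also have "\<epsilon> \<le> \<delta>" by (simp add: \<epsilon>_def)
      finally show ?thesis .
    qed
    have wnz: "\<forall>k. Suc k < n \<longrightarrow> U n x (Suc k) k \<noteq> 0"
    proof (intro allI impI)
      fix k assume k: "Suc k < n"
      have kl: "k < n" using k by simp
      have l: "prv n k < n" "nxt n k < n" "nxt n (nxt n k) < n" using n0 by (simp_all add: prv_lt nxt_lt)
      have "0 < Wfun (tq (adiff n x (prv n k))) (tq (adiff n x k)) (tq (adiff n x (nxt n k)))
     (pc n x (prv n k)) (pc n x k) (pc n x (nxt n k)) (pc n x (nxt n (nxt n k)))"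
        using \<delta>(2) tA[OF l(1)] tA[OF kl] tA[OF l(2)] tP[OF l(1)] tP[OF kl] tP[OF l(2)] tP[OF l(3)] by blast
      then show "U n x (Suc k) k \<noteq> 0" unfolding w_eq[OF n3 xP k] by simp
    qed
    show "D_plus_bracket n x = tangent_Cn n x" by (rule DPB_eq[OF n3 xP wnz])
  qed
qed


end
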